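(* Let ${\sf Gr}^{\sf count}$ be the category of countable groups and ${\sf Gr}^{\sf f.g.}$ the category of finitely generated groups (both full subcategories of the category of groups). Any functor ${\sf Gr}^{\sf count}\to{\sf Gr}^{\sf f.g.}$ is isomorphic to a constant functor. *)

theory Defs
  imports "HOL-Algebra.Generated_Groups"
begin

type_synonym ngroup = "nat monoid"

text \<open>Objects of Gr^count (up to the equivalence with the full subcategory of
groups whose carrier is a subset of nat).\<close>
definition cgrp :: "ngroup \<Rightarrow> bool" where
  "cgrp G \<longleftrightarrow> group G"

definition fg_grp :: "ngroup \<Rightarrow> bool" where
  "fg_grp G \<longleftrightarrow> group G \<and>
     (\<exists>S. finite S \<and> S \<subseteq> carrier G \<and> generate G S = carrier G)"

definition mor :: "ngroup \<Rightarrow> ngroup \<Rightarrow> (nat \<Rightarrow> nat) set" where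
  "mor G H = hom G H \<inter> extensional (carrier G)"

definition idm :: "ngroup \<Rightarrow> nat \<Rightarrow> nat" where
  "idm G = restrict (\<lambda>x. x) (carrier G)"

definition is_functor ::
  "(ngroup \<Rightarrow> ngroup) \<Rightarrow> (ngroup \<Rightarrow> ngroup \<Rightarrow> (nat \<Rightarrow> nat) \<Rightarrow> (nat \<Rightarrow> nat)) \<Rightarrow> bool" where
  "is_functor F Fm \<longleftrightarrow>
     (\<forall>G. cgrp G \<longrightarrow> fg_grp (F G)) \<and>
     (\<forall>G H f. cgrp G \<and> cgrp H \<and> f \<in> mor G H \<longrightarrow> Fm G H f \<in> mor (F G) (F H)) \<and>
     (\<forall>G. cgrp G \<longrightarrow> Fm G G (idm G) = idm (F G)) \<and>
     (\<forall>G H K f g. cgrp G \<and> cgrp H \<and> cgrp K \<and> f \<in> mor G H \<and> g \<in> mor H K \<longrightarrow>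
        Fm G K (compose (carrier G) g f) = compose (carrier (F G)) (Fm H K g) (Fm G H f))"

text \<open>F is naturally isomorphic to the constant functor with value C
  (which sends every morphism to the identity of C).\<close>
definition iso_to_const ::
  "(ngroup \<Rightarrow> ngroup) \<Rightarrow> (ngroup \<Rightarrow> ngroup \<Rightarrow> (nat \<Rightarrow> nat) \<Rightarrow> (nat \<Rightarrow> nat)) \<Rightarrow> ngroup \<Rightarrow> bool" where
  "iso_to_const F Fm C \<longleftrightarrow>
     (\<exists>\<eta>. (\<forall>G. cgrp G \<longrightarrow> \<eta> G \<in> iso (F G) C \<inter> extensional (carrier (F G))) \<and>
          (\<forall>G H f. cgrp G \<and> cgrp H \<and> f \<in> mor G H \<longrightarrow>
             compose (carrier (F G)) (\<eta> H) (Fm G H f) = compose (carrier (F G)) (idm C) (\<eta> G)))"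

end

theory Submission
  imports Defs "HOL-Algebra.Product_Groups" "HOL-Library.Countable_Set"
begin

lemma transport:
  fixes S :: "'a monoid" and enc :: "'a \<Rightarrow> nat"
  assumes G: "group S" and inj: "inj_on enc (carrier S)"
  defines "dec \<equiv> inv_into (carrier S) enc"
  defines "T \<equiv> \<lparr>carrier = enc ` carrier S, mult = \<lambda>a b. enc (dec a \<otimes>\<^bsub>S\<^esub> dec b), one = enc \<one>\<^bsub>S\<^esub>\<rparr>"
  shows "group T" "enc \<in> hom S T" "dec \<in> hom T S"
    "\<And>x. x \<in> carrier S \<Longrightarrow> dec (enc x) = x"
    "\<And>y. y \<in> carrier T \<Longrightarrow> enc (dec y) = y"
    "\<And>y. y \<in> carrier T \<Longrightarrow> dec y \<in> carrier S"
proof -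
  interpret S: group S by (rule G)
  have de[simp]: "\<And>x. x \<in> carrier S \<Longrightarrow> dec (enc x) = x" unfolding dec_def using inj by simp
  have ed[simp]: "\<And>y. y \<in> enc ` carrier S \<Longrightarrow> enc (dec y) = y" unfolding dec_def by (simp add: f_inv_into_f)
  have dc[simp]: "\<And>y. y \<in> enc ` carrier S \<Longrightarrow> dec y \<in> carrier S" unfolding dec_def by (simp add: inv_into_into)
  show "\<And>x. x \<in> carrier S \<Longrightarrow> dec (enc x) = x" by simp
  show "\<And>y. y \<in> carrier T \<Longrightarrow> enc (dec y) = y" "\<And>y. y \<in> carrier T \<Longrightarrow> dec y \<in> carrier S"
    by (auto simp: T_def)
  show "group T"
  proof (rule groupI)
    fix x y z assume "x \<in> carrier T" "y \<in> carrier T" "z \<in> carrier T"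
    then show "x \<otimes>\<^bsub>T\<^esub> y \<otimes>\<^bsub>T\<^esub> z = x \<otimes>\<^bsub>T\<^esub> (y \<otimes>\<^bsub>T\<^esub> z)"
      by (auto simp: T_def S.m_assoc)
  next
    fix x assume x: "x \<in> carrier T"
    then show "\<exists>y\<in>carrier T. y \<otimes>\<^bsub>T\<^esub> x = \<one>\<^bsub>T\<^esub>"
      apply (auto simp: T_def)
      by (metis S.inv_closed S.l_inv)
  qed (auto simp: T_def)
  show "enc \<in> hom S T" by (auto simp: T_def hom_def)
  show "dec \<in> hom T S" by (auto simp: T_def hom_def)
qed

lemma hom_agree_generate:
  assumes "group G" "group H" "h1 \<in> hom G H" "h2 \<in> hom G H" "S \<subseteq> carrier G"
    "\<And>s. s \<in> S \<Longrightarrow> h1 s = h2 s" "x \<in> generate G S"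
  shows "h1 x = h2 x"
  using assms(7)
proof -
  have gh1: "group_hom G H h1" "group_hom G H h2" by (simp_all add: group_hom_def group_hom_axioms_def assms)
  show ?thesis using assms(7)
proof (induction rule: generate.induct)
  case one
  then show ?case using gh1 by (simp add: group_hom.hom_one)
next
  case (incl h)
  then show ?case using assms by simp
next
  case (inv h)
  have "h \<in> carrier G" using inv assms by blast
  then show ?case using gh1 inv assms(6) by (simp add: group_hom.hom_inv)
next
  case (eng h1a h2a)
  have "h1a \<in> carrier G" "h2a \<in> carrier G" using eng assms
    by (meson group.generate_incl subsetD)+
  then show ?case using eng assms by (simp add: hom_mult)
qed
qed

lemma nat_set_set_uncountable: "\<not> countable (UNIV :: nat set set)"
proof
  assume "countable (UNIV :: nat set set)"
  then have "range (from_nat_into (UNIV :: nat set set)) = Pow (UNIV::nat set)" by simp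
  then show False using Cantors_theorem by blast
qed

lemma countable_fin_supp:
  "countable {x :: nat \<Rightarrow> nat. finite {i. x i \<noteq> c}}"
proof -
  have "{x :: nat \<Rightarrow> nat. finite {i. x i \<noteq> c}} \<subseteq> range (\<lambda>xs i. if i < length xs then xs ! i else c)"
  proof
    fix x :: "nat \<Rightarrow> nat" assume "x \<in> {x. finite {i. x i \<noteq> c}}"
    then obtain k where k: "{i. x i \<noteq> c} \<subseteq> {..<k}" using finite_nat_bounded by blast
    have "x = (\<lambda>i. if i < length (map x [0..<k]) then map x [0..<k] ! i else c)"
      using k by (auto simp: fun_eq_iff)
    then show "x \<in> range (\<lambda>xs i. if i < length xs then xs ! i else c)" by blast
  qed
  then show ?thesis by (rule countable_subset) simp
qed

lemma big_group:
  assumes G: "group (G::ngroup)"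
  shows "\<exists>K::ngroup. group K \<and> (\<exists>I R E. (\<forall>n::nat. I n \<in> mor G K) \<and> (\<forall>n. R n \<in> mor K G) \<and> (\<forall>A. E A \<in> mor K K) \<and>
     (\<forall>(n::nat) A. compose (carrier G) (R n) (compose (carrier G) (E A) (I n)) = (\<lambda>g\<in>carrier G. if n \<in> A then g else \<one>\<^bsub>G\<^esub>)))"
proof -
  interpret G: group G by (rule G)
  define S where "S = sum_group (UNIV::nat set) (\<lambda>_. G)"
  have gS: "group S" unfolding S_def by (simp add: G)
  have cS: "carrier S = {x. (\<forall>i. x i \<in> carrier G) \<and> finite {i. x i \<noteq> \<one>\<^bsub>G\<^esub>}}"
    unfolding S_def by (simp add: carrier_sum_group G PiE_iff)
  have mS: "\<And>x y. x \<otimes>\<^bsub>S\<^esub> y = (\<lambda>i. x i \<otimes>\<^bsub>G\<^esub> y i)"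
    unfolding S_def by (simp add: restrict_UNIV)
  have "countable (carrier S)" unfolding cS
    by (rule countable_subset[OF _ countable_fin_supp]) auto
  then have inj: "inj_on (to_nat_on (carrier S)) (carrier S)" by blast
  define enc where "enc = to_nat_on (carrier S)"
  define dec where "dec = inv_into (carrier S) enc"
  define K where "K = \<lparr>carrier = enc ` carrier S, mult = \<lambda>a b. enc (dec a \<otimes>\<^bsub>S\<^esub> dec b), one = enc \<one>\<^bsub>S\<^esub>\<rparr>"
  note tr = transport[OF gS inj, folded enc_def, folded dec_def, folded K_def]
  define i where "i n = (\<lambda>g. \<lambda>j::nat. if j = n then g else \<one>\<^bsub>G\<^esub>)" for n
  define r where "r n = (\<lambda>x::nat\<Rightarrow>nat. x n)" for n
  define e where "e A = (\<lambda>x::nat\<Rightarrow>nat. \<lambda>j. if j \<in> A then x j else \<one>\<^bsub>G\<^esub>)" for A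
  have hi: "i n \<in> hom G S" for n
  proof -
    have "finite {j. i n g j \<noteq> \<one>\<^bsub>G\<^esub>}" for g
      by (rule finite_subset[of _ "{n}"]) (auto simp: i_def)
    then show ?thesis by (auto simp: hom_def cS mS i_def fun_eq_iff)
  qed
  have hr: "r n \<in> hom S G" for n by (auto simp: hom_def cS mS r_def)
  have he: "e A \<in> hom S S" for A
  proof -
    have "finite {j. e A x j \<noteq> \<one>\<^bsub>G\<^esub>}" if "x \<in> carrier S" for x
      by (rule finite_subset[of _ "{j. x j \<noteq> \<one>\<^bsub>G\<^esub>}"]) (use that in \<open>auto simp: e_def cS\<close>)
    then show ?thesis by (auto simp: hom_def cS mS e_def fun_eq_iff)
  qed
  define I where "I n = restrict (enc \<circ> i n) (carrier G)" for n
  define R where "R n = restrict (r n \<circ> dec) (carrier K)" for n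
  define E where "E A = restrict (enc \<circ> e A \<circ> dec) (carrier K)" for A
  have "I n \<in> mor G K" for n
  proof -
    have "enc \<circ> i n \<in> hom G K" using hom_compose[OF hi tr(2)] .
    then show ?thesis unfolding mor_def I_def by (auto simp: hom_def)
  qed
  moreover have "R n \<in> mor K G" for n
  proof -
    have "r n \<circ> dec \<in> hom K G" using hom_compose[OF tr(3) hr] .
    then show ?thesis unfolding mor_def R_def by (auto simp: hom_def monoid.m_closed[OF group.is_monoid[OF tr(1)]])
  qed
  moreover have "E A \<in> mor K K" for A
  proof -
    have "enc \<circ> e A \<circ> dec \<in> hom K K" using hom_compose[OF hom_compose[OF tr(3) he] tr(2)]
      by (simp add: comp_assoc)
    then show ?thesis unfolding mor_def E_def by (auto simp: hom_def monoid.m_closed[OF group.is_monoid[OF tr(1)]])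
  qed
  moreover have "compose (carrier G) (R n) (compose (carrier G) (E A) (I n)) = (\<lambda>g\<in>carrier G. if n \<in> A then g else \<one>\<^bsub>G\<^esub>)" for n A
  proof (rule ext)
    fix g
    show "compose (carrier G) (R n) (compose (carrier G) (E A) (I n)) g = (\<lambda>g\<in>carrier G. if n \<in> A then g else \<one>\<^bsub>G\<^esub>) g"
    proof (cases "g \<in> carrier G")
      case True
      have ig: "i n g \<in> carrier S" using hi True by (auto simp: hom_def)
      have eg: "e A (i n g) \<in> carrier S" using he ig by (auto simp: hom_def)
      have k1: "enc (i n g) \<in> carrier K" using tr(2) ig by (auto simp: hom_def)
      have k2: "enc (e A (i n g)) \<in> carrier K" using tr(2) eg by (auto simp: hom_def)
      show ?thesis using True k1 k2 ig eg
        by (simp add: compose_def I_def R_def E_def tr(4)) (simp add: r_def e_def i_def)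
    qed (simp add: compose_def)
  qed
  ultimately have "group K \<and> (\<forall>n::nat. I n \<in> mor G K) \<and> (\<forall>n. R n \<in> mor K G) \<and> (\<forall>A. E A \<in> mor K K) \<and>
     (\<forall>(n::nat) A. compose (carrier G) (R n) (compose (carrier G) (E A) (I n)) = (\<lambda>g\<in>carrier G. if n \<in> A then g else \<one>\<^bsub>G\<^esub>))"
    using tr(1) by blast
  then show ?thesis by blast
qed

lemma mor_compose:
  assumes "group X" "f \<in> mor X Y" "g \<in> mor Y Z"
  shows "compose (carrier X) g f \<in> mor X Z"
proof -
  have mc: "\<And>x y. x \<in> carrier X \<Longrightarrow> y \<in> carrier X \<Longrightarrow> x \<otimes>\<^bsub>X\<^esub> y \<in> carrier X"
    using assms(1) by (simp add: group.is_monoid monoid.m_closed)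
  show ?thesis using assms(2,3) by (auto simp: mor_def hom_def compose_def Pi_iff mc)
qed

lemma functor_comp:
  assumes "is_functor F Fm" "group X" "group Y" "group Z" "f \<in> mor X Y" "g \<in> mor Y Z"
  shows "Fm X Z (compose (carrier X) g f) = compose (carrier (F X)) (Fm Y Z g) (Fm X Y f)"
  using assms unfolding is_functor_def cgrp_def by blast

lemma functor_mor:
  assumes "is_functor F Fm" "group X" "group Y" "f \<in> mor X Y"
  shows "Fm X Y f \<in> mor (F X) (F Y)"
  using assms unfolding is_functor_def cgrp_def by blast

lemma functor_fg:
  assumes "is_functor F Fm" "group X"
  shows "fg_grp (F X)"
  using assms unfolding is_functor_def cgrp_def by blast

lemma functor_id:
  assumes "is_functor F Fm" "group X"
  shows "Fm X X (idm X) = idm (F X)"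
  using assms unfolding is_functor_def cgrp_def by blast

lemma key:
  assumes F: "is_functor F Fm" and G: "group G"
  shows "Fm G G (idm G) = Fm G G (\<lambda>g\<in>carrier G. \<one>\<^bsub>G\<^esub>)"
proof -
  obtain K I R E where K: "group K" and I: "\<And>n::nat. I n \<in> mor G K" and R: "\<And>n. R n \<in> mor K G"
    and E: "\<And>A. E A \<in> mor K K"
    and IRE: "\<And>(n::nat) A. compose (carrier G) (R n) (compose (carrier G) (E A) (I n)) = (\<lambda>g\<in>carrier G. if n \<in> A then g else \<one>\<^bsub>G\<^esub>)"
    using big_group[OF G] by auto
  have fgK: "fg_grp (F K)" by (rule functor_fg[OF F K])
  then obtain S where S: "finite S" "S \<subseteq> carrier (F K)" "generate (F K) S = carrier (F K)" and gFK: "group (F K)"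
    unfolding fg_grp_def by blast
  define M where "M A = Fm K K (E A)" for A
  have M: "M A \<in> mor (F K) (F K)" for A unfolding M_def by (rule functor_mor[OF F K K E])
  have "\<not> inj M"
  proof
    assume injM: "inj M"
    define \<phi> where "\<phi> A = map (M A) (sorted_list_of_set S)" for A
    have "inj \<phi>"
    proof (rule injI)
      fix A B assume "\<phi> A = \<phi> B"
      then have agree: "\<And>s. s \<in> S \<Longrightarrow> M A s = M B s" using S(1) by (simp add: \<phi>_def map_eq_conv)
      have "M A = M B"
      proof (rule ext)
        fix x show "M A x = M B x"
        proof (cases "x \<in> carrier (F K)")
          case True
          have hh: "M A \<in> hom (F K) (F K)" "M B \<in> hom (F K) (F K)" using M unfolding mor_def by blast+
          have "x \<in> generate (F K) S" using True S(3) by simp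
          then show ?thesis
            apply (rule hom_agree_generate[OF gFK gFK hh S(2), rotated])
            by (rule agree)
        next
          case False
          have ea: "M A \<in> extensional (carrier (F K))" "M B \<in> extensional (carrier (F K))" using M unfolding mor_def by blast+
          have "M A x = undefined" by (rule extensional_arb[OF ea(1) False])
          moreover have "M B x = undefined" by (rule extensional_arb[OF ea(2) False])
          ultimately show ?thesis by simp
        qed
      qed
      then show "A = B" by (rule injD[OF injM])
    qed
    then have "countable (UNIV :: nat set set)" by (rule countableI')
    then show False using nat_set_set_uncountable by blast
  qed
  then obtain A B where AB: "A \<noteq> B" "M A = M B" unfolding inj_def by blast
  have main: "Fm G G (idm G) = Fm G G (\<lambda>g\<in>carrier G. \<one>\<^bsub>G\<^esub>)" if "n \<in> A'" "n \<notin> B'" "M A' = M B'" for n A' B'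
  proof -
    have gen: "Fm G G (\<lambda>g\<in>carrier G. if n \<in> C then g else \<one>\<^bsub>G\<^esub>) = compose (carrier (F G)) (Fm K G (R n)) (compose (carrier (F G)) (M C) (Fm G K (I n)))" for C
    proof -
      have "Fm G G (\<lambda>g\<in>carrier G. if n \<in> C then g else \<one>\<^bsub>G\<^esub>) = Fm G G (compose (carrier G) (R n) (compose (carrier G) (E C) (I n)))"
        by (simp add: IRE)
      also have "\<dots> = compose (carrier (F G)) (Fm K G (R n)) (Fm G K (compose (carrier G) (E C) (I n)))"
        by (rule functor_comp[OF F G K G mor_compose[OF G I E] R])
      also have "Fm G K (compose (carrier G) (E C) (I n)) = compose (carrier (F G)) (M C) (Fm G K (I n))"
        unfolding M_def by (rule functor_comp[OF F G K K I E])
      finally show ?thesis .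
    qed
    have "idm G = (\<lambda>g\<in>carrier G. if n \<in> A' then g else \<one>\<^bsub>G\<^esub>)" using that by (simp add: idm_def)
    moreover have "(\<lambda>g\<in>carrier G. \<one>\<^bsub>G\<^esub>) = (\<lambda>g\<in>carrier G. if n \<in> B' then g else \<one>\<^bsub>G\<^esub>)" using that by simp
    ultimately show ?thesis using gen[of A'] gen[of B'] that by simp
  qed
  from AB obtain n where "(n \<in> A \<and> n \<notin> B) \<or> (n \<in> B \<and> n \<notin> A)" by blast
  then show ?thesis
  proof
    assume "n \<in> A \<and> n \<notin> B" then show ?thesis using main[of n A B] AB(2) by blast
  next
    assume "n \<in> B \<and> n \<notin> A" then show ?thesis using main[of n B A] AB(2) by simp
  qed
qed

theorem proposition2p9:
  assumes "is_functor F Fm"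
  shows "\<exists>C. fg_grp C \<and> iso_to_const F Fm C"
proof -
  note F = assms
  define T :: ngroup where "T = \<lparr>carrier = {0}, mult = \<lambda>_ _. 0, one = 0\<rparr>"
  have gT: "group T" unfolding T_def by (rule groupI) auto
  define C where "C = F T"
  have fgC: "fg_grp C" using functor_fg[OF F gT] C_def by simp
  define t where "t G = (\<lambda>x\<in>carrier G. (0::nat))" for G :: ngroup
  define u where "u G = (\<lambda>x\<in>carrier T. \<one>\<^bsub>G\<^esub>)" for G :: ngroup
  have t: "t G \<in> mor G T" if "group G" for G
  proof -
    interpret group G by (rule that)
    show ?thesis by (auto simp: mor_def hom_def t_def T_def)
  qed
  have u: "u G \<in> mor T G" if "group G" for G
  proof -
    interpret group G by (rule that)
    show ?thesis by (auto simp: mor_def hom_def u_def T_def)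
  qed
  have tu: "compose (carrier T) (t G) (u G) = idm T" if "group G" for G
  proof -
    interpret group G by (rule that)
    show ?thesis by (auto simp: compose_def t_def u_def idm_def T_def fun_eq_iff)
  qed
  have ut: "compose (carrier G) (u G) (t G) = (\<lambda>g\<in>carrier G. \<one>\<^bsub>G\<^esub>)" for G
    by (auto simp: compose_def t_def u_def T_def fun_eq_iff)
  define \<eta> where "\<eta> G = Fm G T (t G)" for G
  have heta: "\<eta> G \<in> mor (F G) C" if "group G" for G
    unfolding \<eta>_def C_def by (rule functor_mor[OF F that gT t[OF that]])
  have iso: "\<eta> G \<in> iso (F G) C \<inter> extensional (carrier (F G))" if G: "group G" for G
  proof -
    have hu: "Fm T G (u G) \<in> mor C (F G)" unfolding C_def by (rule functor_mor[OF F gT G u[OF G]])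
    have eq1: "idm C = compose (carrier C) (\<eta> G) (Fm T G (u G))"
      using functor_id[OF F gT] functor_comp[OF F gT G gT u[OF G] t[OF G]] tu[OF G]
      unfolding C_def \<eta>_def by simp
    have eq2: "idm (F G) = compose (carrier (F G)) (Fm T G (u G)) (\<eta> G)"
      using functor_id[OF F G] key[OF F G] functor_comp[OF F G gT G t[OF G] u[OF G]] ut[of G]
      unfolding \<eta>_def by simp
    have inj: "inj_on (\<eta> G) (carrier (F G))"
    proof (rule inj_onI)
      fix x y assume xy: "x \<in> carrier (F G)" "y \<in> carrier (F G)" "\<eta> G x = \<eta> G y"
      have "x = idm (F G) x" using xy by (simp add: idm_def)
      also have "\<dots> = Fm T G (u G) (\<eta> G x)" using xy by (simp add: eq2 compose_def)
      also have "\<dots> = Fm T G (u G) (\<eta> G y)" using xy by simp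
      also have "\<dots> = idm (F G) y" using xy by (simp add: eq2 compose_def)
      also have "\<dots> = y" using xy by (simp add: idm_def)
      finally show "x = y" .
    qed
    have img: "\<eta> G ` carrier (F G) = carrier C"
    proof
      show "\<eta> G ` carrier (F G) \<subseteq> carrier C" using heta[OF G] by (auto simp: mor_def hom_def)
    next
      show "carrier C \<subseteq> \<eta> G ` carrier (F G)"
      proof
        fix c assume c: "c \<in> carrier C"
        have "c = idm C c" using c by (simp add: idm_def)
        also have "\<dots> = \<eta> G (Fm T G (u G) c)" using c by (simp add: eq1 compose_def)
        finally have "c = \<eta> G (Fm T G (u G) c)" .
        moreover have "Fm T G (u G) c \<in> carrier (F G)" using hu c by (auto simp: mor_def hom_def)
        ultimately show "c \<in> \<eta> G ` carrier (F G)" by blast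
      qed
    qed
    show ?thesis using heta[OF G] inj img by (auto simp: mor_def iso_def bij_betw_def)
  qed
  have nat: "compose (carrier (F G)) (\<eta> H) (Fm G H f) = compose (carrier (F G)) (idm C) (\<eta> G)"
    if G: "group G" and H: "group H" and f: "f \<in> mor G H" for G H f
  proof -
    have "compose (carrier G) (t H) f = t G"
      using f by (auto simp: compose_def t_def mor_def hom_def fun_eq_iff)
    then have l: "compose (carrier (F G)) (\<eta> H) (Fm G H f) = \<eta> G"
      using functor_comp[OF F G H gT f t[OF H]] unfolding \<eta>_def by simp
    have "compose (carrier (F G)) (idm C) (\<eta> G) = \<eta> G"
    proof (rule ext)
      fix x show "compose (carrier (F G)) (idm C) (\<eta> G) x = \<eta> G x"
      proof (cases "x \<in> carrier (F G)")
        case True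
        then have "\<eta> G x \<in> carrier C" using heta[OF G] by (auto simp: mor_def hom_def)
        then show ?thesis using True by (simp add: compose_def idm_def)
      next
        case False
        have "\<eta> G \<in> extensional (carrier (F G))" using heta[OF G] by (simp add: mor_def)
        then have "\<eta> G x = undefined" by (rule extensional_arb) (rule False)
        then show ?thesis using False by (simp add: compose_def)
      qed
    qed
    then show ?thesis using l by simp
  qed
  have "iso_to_const F Fm C"
    unfolding iso_to_const_def cgrp_def using iso nat by blast
  then show ?thesis using fgC by blast
qed

end
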